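(* Let $G$ be a finite abelian group with a free Brauer action on the Brauer graph $(\Gamma,\mathfrak o,m)$, with Brauer orbit graph $(\overline\Gamma,\overline{\mathfrak o},\overline m)$, and let $W:\mathcal Z_{\overline\Gamma}\to G$ be the successor weighting associated to the action. Suppose $i\in\Gamma_1$ is incident with $\mu\in\Gamma_0$ and that, for some $g\in G$, $k=\operatorname{val}(\bar\mu)$ and $s\ge 0$, the successor sequence of $i$ at $\mu$ is $i=i_1,i_2,\dots,i_k,i_1^g,\dots,i_k^g,\dots,i_1^{g^s},\dots,i_k^{g^s}$ with all $\operatorname{val}(\mu)=k(s+1)$ entries listed. Then: (1) $g=\omega_{\bar\mu}=W(\overline{i_1},\overline{i_2})W(\overline{i_2},\overline{i_3})\cdots W(\overline{i_k},\overline{i_{k+1}})$, where $\overline{i_{k+1}}=\overline{i_1}$; (2) $\operatorname{ord}(\bar\mu)=s+1$; (3) $\operatorname{ord}(\bar\mu)$ divides $\overline m(\bar\mu)$; in particular $W$ is a Brauer weighting of $(\overline\Gamma,\overline{\mathfrak o},\overline m)$; (4) for $h,h'\in G$, $\mu^h=\mu^{h'}$ if and only if $h(h')^{-1}\in H_{\bar\mu}=\langle\omega_{\bar\mu}\rangle$; (5) the index of $H_{\bar\mu}$ in $G$ equals the number of vertices in the $G$-orbit of $\mu$.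
   Context: Brauer graphs. A Brauer graph $(\Gamma,\mathfrak o,m)$ is a finite connected graph $\Gamma$ (loops and multiple edges allowed) with vertex set $\Gamma_0$, edge set $\Gamma_1$ and at least one edge, together with a multiplicity function $m:\Gamma_0\to\mathbb Z_{\ge 1}$ and, for each vertex $\mu$, a cyclic ordering $\mathfrak o$ of the edges incident with $\mu$. A loop at $\mu$ occurs twice in the cyclic ordering at $\mu$; its two occurrences are regarded as two distinct elements of $\Gamma_1$ (each with its own successor). Edge $j$ is the successor of edge $i$ at $\mu$ if $j$ immediately follows $i$ in the cyclic ordering at $\mu$. The valency $\operatorname{val}(\mu)$ is the number of edges incident with $\mu$, loops counted twice; if $\operatorname{val}(\mu)=1$ the unique edge at $\mu$ is its own successor. For $i$ incident with $\mu$, the successor sequence of $i$ at $\mu$ is $i=i_1,i_2,\dots,i_{\operatorname{val}(\mu)}$, where $i_{r+1}$ is the successor of $i_r$ at $\mu$ (and $i_{\operatorname{val}(\mu)+1}=i_1$). Brauer actions. Let $G$ be a finite abelian group. A Brauer action of $G$ on $(\Gamma,\mathfrak o,m)$ is a faithful action $x\mapsto x^g$ of $G$ on the graph $\Gamma$ (on vertices and edges, compatible with incidence) such that for all $g\in G$: if $j$ is the successor of $i$ at $\mu$ then $j^g$ is the successor of $i^g$ at $\mu^g$, and $m(\mu^g)=m(\mu)$. It is a free Brauer action if $G$ acts freely on $\Gamma_1$. For a free Brauer action, the Brauer orbit graph $(\overline\Gamma,\overline{\mathfrak o},\overline m)$ has as vertices the $G$-orbits $\bar\mu$ of vertices and as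 edges the $G$-orbits $\bar i$ of edges, $\bar i$ being incident with $\bar\mu$ when $i$ is incident with $\mu$; its cyclic ordering is given by: $\bar j$ is the successor of $\bar i$ at $\bar\mu$ whenever $j$ is the successor of $i$ at $\mu$; and $\overline m(\bar\mu)=\operatorname{val}(\mu)m(\mu)/\operatorname{val}(\bar\mu)$. Successor weightings. For a Brauer graph $(\Delta,\mathfrak o,m)$ and $\mu\in\Delta_0$ let $\mathcal Z_\mu$ be the set of pairs $(i,j)$ of edges with $j$ the successor of $i$ at $\mu$, and $\mathcal Z_\Delta=\bigsqcup_{\mu\in\Delta_0}\mathcal Z_\mu$ (disjoint union). A successor weighting is a function $W:\mathcal Z_\Delta\to G$. Put $\omega_\mu=\prod_{(i,j)\in\mathcal Z_\mu}W(i,j)$, let $\operatorname{ord}(\mu)$ be the order of $\omega_\mu$ in $G$, and $H_\mu=\langle\omega_\mu\rangle$. $W$ is a Brauer weighting if $\operatorname{ord}(\mu)$ divides $m(\mu)$ for all $\mu\in\Delta_0$. Successor weighting associated to a free Brauer action. For each edge $\bar i$ of $\overline\Gamma$ fix a representative $i_*\in\bar i$, and for each endpoint $\bar\mu$ of $\bar i$ fix $\mu_*\in\bar\mu$ incident with $i_*$. For $(\bar i,\bar j)\in\mathcal Z_{\bar\mu}$, there is a unique edge $l\in\bar j$ that is the successor of $i_*$ at $\mu_*$, and $l=(j_* )^g$ for a unique $g\in G$; set $W(\bar i,\bar j)=g$. This defines $W:\mathcal Z_{\overline\Gamma}\to G$. *)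

theory Defs
  imports "HOL-Algebra.Algebra" "HOL-Algebra.Multiplicative_Group"
begin

(* Brauer graphs in "dart" (edge-occurrence) form.
   D    : the edge occurrences (darts); a dart is an edge together with one of its ends,
          so a loop contributes two distinct darts at its vertex, a non-loop edge one
          dart at each endpoint.
   edge d : the edge of which d is an occurrence;  vert d : the vertex at which d sits.
   nxt d  : the occurrence following d in the cyclic ordering at vert d.
   m      : multiplicity function. *)

definition adj_rel :: "'d set \<Rightarrow> ('d \<Rightarrow> 'e) \<Rightarrow> ('d \<Rightarrow> 'v) \<Rightarrow> ('v \<times> 'v) set" where
  "adj_rel D edge vert =
     {(vert d, vert d') | d d'. d \<in> D \<and> d' \<in> D \<and> edge d = edge d'}"

definition brauer_graph ::
  "'v set \<Rightarrow> 'e set \<Rightarrow> 'd set \<Rightarrow> ('d \<Rightarrow> 'e) \<Rightarrow> ('d \<Rightarrow> 'v) \<Rightarrow> ('d \<Rightarrow> 'd)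
   \<Rightarrow> ('v \<Rightarrow> nat) \<Rightarrow> bool" where
  "brauer_graph V E D edge vert nxt m \<longleftrightarrow>
     finite D \<and> E \<noteq> {} \<and> edge ` D = E \<and> vert ` D = V
     \<and> (\<forall>e\<in>E. card {d\<in>D. edge d = e} = 2)
     \<and> bij_betw nxt D D
     \<and> (\<forall>d\<in>D. vert (nxt d) = vert d)
     \<and> (\<forall>d\<in>D. \<forall>d'\<in>D. vert d' = vert d \<longrightarrow> (\<exists>n. (nxt ^^ n) d = d'))
     \<and> (\<forall>v\<in>V. m v \<ge> 1)
     \<and> (\<forall>u\<in>V. \<forall>w\<in>V. (u, w) \<in> (adj_rel D edge vert)\<^sup>*)"

(* valency: number of edge occurrences at v (loops counted twice) *)
definition val :: "'d set \<Rightarrow> ('d \<Rightarrow> 'v) \<Rightarrow> 'v \<Rightarrow> nat" where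
  "val D vert v = card {d\<in>D. vert d = v}"

definition is_action :: "('g, 'b) monoid_scheme \<Rightarrow> 'x set \<Rightarrow> ('g \<Rightarrow> 'x \<Rightarrow> 'x) \<Rightarrow> bool" where
  "is_action G Sx act \<longleftrightarrow>
     (\<forall>g\<in>carrier G. \<forall>x\<in>Sx. act g x \<in> Sx)
     \<and> (\<forall>x\<in>Sx. act (monoid.one G) x = x)
     \<and> (\<forall>g\<in>carrier G. \<forall>h\<in>carrier G. \<forall>x\<in>Sx. act (monoid.mult G g h) x = act g (act h x))"

definition free_brauer_action ::
  "('g, 'b) monoid_scheme \<Rightarrow> 'v set \<Rightarrow> 'e set \<Rightarrow> 'd set \<Rightarrow> ('d \<Rightarrow> 'e) \<Rightarrow> ('d \<Rightarrow> 'v)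
   \<Rightarrow> ('d \<Rightarrow> 'd) \<Rightarrow> ('v \<Rightarrow> nat)
   \<Rightarrow> ('g \<Rightarrow> 'd \<Rightarrow> 'd) \<Rightarrow> ('g \<Rightarrow> 'v \<Rightarrow> 'v) \<Rightarrow> ('g \<Rightarrow> 'e \<Rightarrow> 'e) \<Rightarrow> bool" where
  "free_brauer_action G V E D edge vert nxt m act actV actE \<longleftrightarrow>
     is_action G D act \<and> is_action G V actV \<and> is_action G E actE
     \<and> (\<forall>g\<in>carrier G. \<forall>d\<in>D. edge (act g d) = actE g (edge d))
     \<and> (\<forall>g\<in>carrier G. \<forall>d\<in>D. vert (act g d) = actV g (vert d))
     \<and> (\<forall>g\<in>carrier G. \<forall>d\<in>D. nxt (act g d) = act g (nxt d))
     \<and> (\<forall>g\<in>carrier G. \<forall>v\<in>V. m (actV g v) = m v)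
     \<and> (\<forall>g\<in>carrier G. (\<forall>v\<in>V. actV g v = v) \<and> (\<forall>e\<in>E. actE g e = e)
            \<and> (\<forall>d\<in>D. act g d = d) \<longrightarrow> g = (monoid.one G))
     \<and> (\<forall>g\<in>carrier G. \<forall>e\<in>E. actE g e = e \<longrightarrow> g = (monoid.one G))"

definition orb :: "('g, 'b) monoid_scheme \<Rightarrow> ('g \<Rightarrow> 'x \<Rightarrow> 'x) \<Rightarrow> 'x \<Rightarrow> 'x set" where
  "orb G act x = (\<lambda>g. act g x) ` carrier G"

(* Brauer orbit graph: the edge occurrences at the orbit vertex vb are the G-orbits of
   darts lying over vb; these index Z_vb (each occurrence paired with its successor). *)
definition orb_darts_at ::
  "('g, 'b) monoid_scheme \<Rightarrow> 'd set \<Rightarrow> ('d \<Rightarrow> 'v) \<Rightarrow> ('g \<Rightarrow> 'd \<Rightarrow> 'd)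
   \<Rightarrow> ('g \<Rightarrow> 'v \<Rightarrow> 'v) \<Rightarrow> 'v set \<Rightarrow> 'd set set" where
  "orb_darts_at G D vert act actV vb = {orb G act d | d. d \<in> D \<and> orb G actV (vert d) = vb}"

definition val_bar ::
  "('g, 'b) monoid_scheme \<Rightarrow> 'd set \<Rightarrow> ('d \<Rightarrow> 'v) \<Rightarrow> ('g \<Rightarrow> 'd \<Rightarrow> 'd)
   \<Rightarrow> ('g \<Rightarrow> 'v \<Rightarrow> 'v) \<Rightarrow> 'v set \<Rightarrow> nat" where
  "val_bar G D vert act actV vb = card (orb_darts_at G D vert act actV vb)"

definition m_bar ::
  "('g, 'b) monoid_scheme \<Rightarrow> 'd set \<Rightarrow> ('d \<Rightarrow> 'v) \<Rightarrow> ('v \<Rightarrow> nat) \<Rightarrow> ('g \<Rightarrow> 'd \<Rightarrow> 'd)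
   \<Rightarrow> ('g \<Rightarrow> 'v \<Rightarrow> 'v) \<Rightarrow> 'v set \<Rightarrow> nat" where
  "m_bar G D vert m act actV vb =
     (let mu = (SOME mu. mu \<in> vb) in val D vert mu * m mu div val_bar G D vert act actV vb)"

(* Representatives: erep chooses a representative edge i_* in each edge orbit.  The
   representative of an occurrence-orbit delta (an occurrence of the orbit edge at an
   orbit vertex) is the unique occurrence of the representative edge lying in delta,
   i.e. the occurrence of i_* at the chosen mu_*. *)
definition rep_dart ::
  "('g, 'b) monoid_scheme \<Rightarrow> ('d \<Rightarrow> 'e) \<Rightarrow> ('g \<Rightarrow> 'e \<Rightarrow> 'e) \<Rightarrow> ('e set \<Rightarrow> 'e)
   \<Rightarrow> 'd set \<Rightarrow> 'd" where
  "rep_dart G edge actE erep delta =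
     (THE x. x \<in> delta \<and> edge x = erep (orb G actE (edge x)))"

definition W ::
  "('g, 'b) monoid_scheme \<Rightarrow> ('d \<Rightarrow> 'e) \<Rightarrow> ('d \<Rightarrow> 'd) \<Rightarrow> ('g \<Rightarrow> 'd \<Rightarrow> 'd)
   \<Rightarrow> ('g \<Rightarrow> 'e \<Rightarrow> 'e) \<Rightarrow> ('e set \<Rightarrow> 'e) \<Rightarrow> 'd set \<Rightarrow> 'g" where
  "W G edge nxt act actE erep delta =
     (THE g. g \<in> carrier G \<and>
        nxt (rep_dart G edge actE erep delta)
          = act g (rep_dart G edge actE erep (orb G act (nxt (rep_dart G edge actE erep delta)))))"

definition omega ::
  "('g, 'b) monoid_scheme \<Rightarrow> 'd set \<Rightarrow> ('d \<Rightarrow> 'e) \<Rightarrow> ('d \<Rightarrow> 'v) \<Rightarrow> ('d \<Rightarrow> 'd)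
   \<Rightarrow> ('g \<Rightarrow> 'd \<Rightarrow> 'd) \<Rightarrow> ('g \<Rightarrow> 'v \<Rightarrow> 'v) \<Rightarrow> ('g \<Rightarrow> 'e \<Rightarrow> 'e) \<Rightarrow> ('e set \<Rightarrow> 'e)
   \<Rightarrow> 'v set \<Rightarrow> 'g" where
  "omega G D edge vert nxt act actV actE erep vb =
     finprod G (W G edge nxt act actE erep) (orb_darts_at G D vert act actV vb)"

definition ord_bar where
  "ord_bar G D edge vert nxt act actV actE erep vb =
     group.ord G (omega G D edge vert nxt act actV actE erep vb)"

definition brauer_weighting where
  "brauer_weighting G V D edge vert nxt m act actV actE erep \<longleftrightarrow>
     (\<forall>vb \<in> orb G actV ` V.
        ord_bar G D edge vert nxt act actV actE erep vb dvd m_bar G D vert m act actV vb)"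

end

theory Submission imports Defs begin

lemma orb_act_gen:
  fixes G (structure)
  assumes "group G" "is_action G S f" "x \<in> S" "a \<in> carrier G"
  shows "orb G f (f a x) = orb G f x"
proof -
  interpret group G by fact
  have c: "\<And>b. b \<in> carrier G \<Longrightarrow> f b (f a x) = f (b \<otimes> a) x"
    using assms(2,3,4) unfolding is_action_def by auto
  show ?thesis unfolding orb_def
  proof (intro equalityI subsetI)
    fix y assume "y \<in> (\<lambda>g. f g (f a x)) ` carrier G"
    then obtain b where "b \<in> carrier G" "y = f b (f a x)" by auto
    then show "y \<in> (\<lambda>g. f g x) ` carrier G" using c assms(4) by auto
  next
    fix y assume "y \<in> (\<lambda>g. f g x) ` carrier G"
    then obtain b where b: "b \<in> carrier G" "y = f b x" by auto
    have "f (b \<otimes> inv a) (f a x) = f b x" using c[of "b \<otimes> inv a"] b assms(4)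
      by (simp add: m_assoc)
    then show "y \<in> (\<lambda>g. f g (f a x)) ` carrier G" using b assms(4)
      by (metis image_eqI inv_closed m_closed)
  qed
qed

lemma card_image_same_kernel:
  assumes "\<And>x y. x \<in> A \<Longrightarrow> y \<in> A \<Longrightarrow> f x = f y \<longleftrightarrow> g x = g y"
  shows "card (f ` A) = card (g ` A)"
proof -
  let ?P = "(\<lambda>x. (f x, g x)) ` A"
  have 1: "f ` A = fst ` ?P" by (auto simp: image_image)
  have 2: "g ` A = snd ` ?P" by (auto simp: image_image)
  have "inj_on fst ?P" using assms by (auto simp: inj_on_def)
  moreover have "inj_on snd ?P" using assms by (auto simp: inj_on_def)
  ultimately show ?thesis unfolding 1 2 by (simp add: card_image)
qed

locale fba =
  fixes G :: "('g, 'b) monoid_scheme" (structure)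
    and V :: "'v set" and E :: "'e set" and D :: "'d set"
    and edge :: "'d \<Rightarrow> 'e" and vert :: "'d \<Rightarrow> 'v" and nxt :: "'d \<Rightarrow> 'd"
    and m :: "'v \<Rightarrow> nat"
    and act :: "'g \<Rightarrow> 'd \<Rightarrow> 'd" and actV :: "'g \<Rightarrow> 'v \<Rightarrow> 'v" and actE :: "'g \<Rightarrow> 'e \<Rightarrow> 'e"
    and erep :: "'e set \<Rightarrow> 'e"
  assumes cg: "comm_group G" and finG: "finite (carrier G)"
    and bg: "brauer_graph V E D edge vert nxt m"
    and fa: "free_brauer_action G V E D edge vert nxt m act actV actE"
    and er: "\<forall>e\<in>E. erep (orb G actE e) \<in> orb G actE e"
begin

sublocale comm_group G by (rule cg)

lemma actD: "is_action G D act" and actVV: "is_action G V actV" and actEE: "is_action G E actE"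
  using fa unfolding free_brauer_action_def by auto

lemma act_cl: "a \<in> carrier G \<Longrightarrow> x \<in> D \<Longrightarrow> act a x \<in> D"
  using actD unfolding is_action_def by auto
lemma act_one: "x \<in> D \<Longrightarrow> act \<one> x = x"
  using actD unfolding is_action_def by auto
lemma act_mult: "a \<in> carrier G \<Longrightarrow> b \<in> carrier G \<Longrightarrow> x \<in> D \<Longrightarrow> act (a \<otimes> b) x = act a (act b x)"
  using actD unfolding is_action_def by auto
lemma actV_cl: "a \<in> carrier G \<Longrightarrow> x \<in> V \<Longrightarrow> actV a x \<in> V"
  using actVV unfolding is_action_def by auto
lemma actV_one: "x \<in> V \<Longrightarrow> actV \<one> x = x"
  using actVV unfolding is_action_def by auto
lemma actV_mult: "a \<in> carrier G \<Longrightarrow> b \<in> carrier G \<Longrightarrow> x \<in> V \<Longrightarrow> actV (a \<otimes> b) x = actV a (actV b x)"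
  using actVV unfolding is_action_def by auto
lemma actE_cl: "a \<in> carrier G \<Longrightarrow> x \<in> E \<Longrightarrow> actE a x \<in> E"
  using actEE unfolding is_action_def by auto
lemma actE_one: "x \<in> E \<Longrightarrow> actE \<one> x = x"
  using actEE unfolding is_action_def by auto
lemma actE_mult: "a \<in> carrier G \<Longrightarrow> b \<in> carrier G \<Longrightarrow> x \<in> E \<Longrightarrow> actE (a \<otimes> b) x = actE a (actE b x)"
  using actEE unfolding is_action_def by auto
lemma edge_act: "a \<in> carrier G \<Longrightarrow> x \<in> D \<Longrightarrow> edge (act a x) = actE a (edge x)"
  using fa unfolding free_brauer_action_def by auto
lemma vert_act: "a \<in> carrier G \<Longrightarrow> x \<in> D \<Longrightarrow> vert (act a x) = actV a (vert x)"
  using fa unfolding free_brauer_action_def by auto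
lemma nxt_act: "a \<in> carrier G \<Longrightarrow> x \<in> D \<Longrightarrow> nxt (act a x) = act a (nxt x)"
  using fa unfolding free_brauer_action_def by auto
lemma m_act: "a \<in> carrier G \<Longrightarrow> x \<in> V \<Longrightarrow> m (actV a x) = m x"
  using fa unfolding free_brauer_action_def by auto
lemma freeE: "a \<in> carrier G \<Longrightarrow> e \<in> E \<Longrightarrow> actE a e = e \<Longrightarrow> a = \<one>"
  using fa unfolding free_brauer_action_def by auto

lemma finD: "finite D" using bg unfolding brauer_graph_def by auto
lemma edge_in: "x \<in> D \<Longrightarrow> edge x \<in> E" using bg unfolding brauer_graph_def by auto
lemma vert_in: "x \<in> D \<Longrightarrow> vert x \<in> V" using bg unfolding brauer_graph_def by auto
lemma V_eq: "V = vert ` D" using bg unfolding brauer_graph_def by auto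
lemma nxt_bij: "bij_betw nxt D D" using bg unfolding brauer_graph_def by auto
lemma nxt_in: "x \<in> D \<Longrightarrow> nxt x \<in> D" using nxt_bij by (meson bij_betwE)
lemma nxt_vert: "x \<in> D \<Longrightarrow> vert (nxt x) = vert x" using bg unfolding brauer_graph_def by auto
lemma conn: "x \<in> D \<Longrightarrow> y \<in> D \<Longrightarrow> vert y = vert x \<Longrightarrow> \<exists>n. (nxt ^^ n) x = y"
  using bg unfolding brauer_graph_def by auto

lemma nxtn_in: "x \<in> D \<Longrightarrow> (nxt ^^ n) x \<in> D"
  by (induction n) (auto simp: nxt_in)
lemma nxtn_vert: "x \<in> D \<Longrightarrow> vert ((nxt ^^ n) x) = vert x"
  by (induction n) (auto simp: nxt_vert nxtn_in)
lemma nxtn_act: "a \<in> carrier G \<Longrightarrow> x \<in> D \<Longrightarrow> (nxt ^^ n) (act a x) = act a ((nxt ^^ n) x)"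
  by (induction n) (auto simp: nxt_act nxtn_in)
lemma nxtn_inj: "inj_on (nxt ^^ n) D"
  using bij_betw_funpow[OF nxt_bij] bij_betw_def by blast

lemma act_inv: "a \<in> carrier G \<Longrightarrow> x \<in> D \<Longrightarrow> act (inv a) (act a x) = x"
  by (metis act_mult act_one inv_closed l_inv)
lemma actV_inv: "a \<in> carrier G \<Longrightarrow> x \<in> V \<Longrightarrow> actV (inv a) (actV a x) = x"
  by (metis actV_mult actV_one inv_closed l_inv)

lemma act_grp_inj: assumes "x \<in> D" "a \<in> carrier G" "b \<in> carrier G" "act a x = act b x"
  shows "a = b"
proof -
  have "actE a (edge x) = actE b (edge x)" using assms by (metis edge_act)
  then have "actE (inv b \<otimes> a) (edge x) = edge x" using assms
    by (metis actE_mult actE_one edge_in inv_closed l_inv)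
  then have "inv b \<otimes> a = \<one>" using assms by (meson edge_in freeE inv_closed m_closed)
  then show ?thesis using assms by (metis inv_closed inv_comm inv_inv l_inv_ex local.inv_equality)
qed

lemma act_fix: "x \<in> D \<Longrightarrow> a \<in> carrier G \<Longrightarrow> act a x = x \<Longrightarrow> a = \<one>"
  using act_grp_inj[of x a \<one>] act_one by auto

lemma orb_act: "a \<in> carrier G \<Longrightarrow> x \<in> D \<Longrightarrow> orb G act (act a x) = orb G act x"
  by (rule orb_act_gen[OF is_group actD])
lemma orbV_act: "a \<in> carrier G \<Longrightarrow> x \<in> V \<Longrightarrow> orb G actV (actV a x) = orb G actV x"
  by (rule orb_act_gen[OF is_group actVV])
lemma orbE_act: "a \<in> carrier G \<Longrightarrow> x \<in> E \<Longrightarrow> orb G actE (actE a x) = orb G actE x"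
  by (rule orb_act_gen[OF is_group actEE])


lemma cyc:
  assumes d: "d \<in> D"
  shows "0 < val D vert (vert d)" "(nxt ^^ val D vert (vert d)) d = d"
    "inj_on (\<lambda>n. (nxt ^^ n) d) {..<val D vert (vert d)}"
    "{x\<in>D. vert x = vert d} = (\<lambda>n. (nxt ^^ n) d) ` {..<val D vert (vert d)}"
proof -
  obtain n where "(nxt ^^ n) (nxt d) = d" using conn[of "nxt d" d] d nxt_in nxt_vert by auto
  hence ex: "(nxt ^^ Suc n) d = d" by (simp add: funpow_swap1)
  define p where "p = (LEAST n. 0 < n \<and> (nxt ^^ n) d = d)"
  have p: "0 < p \<and> (nxt ^^ p) d = d" unfolding p_def by (rule LeastI[of _ "Suc n"]) (use ex in auto)
  have mult: "(nxt ^^ (q * p)) d = d" for q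
  proof (induction q)
    case (Suc q)
    have "(nxt ^^ (Suc q * p)) d = (nxt ^^ p) ((nxt ^^ (q * p)) d)" by (simp add: funpow_add)
    then show ?case using Suc p by simp
  qed simp
  have modp: "(nxt ^^ j) d = (nxt ^^ (j mod p)) d" for j
  proof -
    have "(nxt ^^ j) d = (nxt ^^ (j mod p)) ((nxt ^^ ((j div p) * p)) d)"
      by (metis comp_apply funpow_add mod_div_mult_eq)
    then show ?thesis using mult by simp
  qed
  have inj: "inj_on (\<lambda>n. (nxt ^^ n) d) {..<p}"
  proof (rule inj_onI, rule ccontr)
    have aux: False if ab: "a < b" "b < p" "(nxt ^^ a) d = (nxt ^^ b) d" for a b
    proof -
      have "(nxt ^^ b) d = (nxt ^^ a) ((nxt ^^ (b - a)) d)"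
        using ab by (metis comp_apply funpow_add le_add_diff_inverse less_imp_le)
      then have "(nxt ^^ (b - a)) d = d" using ab nxtn_inj[of a] d nxtn_in
        by (metis inj_onD)
      moreover have "b - a < p" using ab by auto
      ultimately show False using not_less_Least[of "b - a" "\<lambda>n. 0 < n \<and> (nxt ^^ n) d = d"] ab
        unfolding p_def by auto
    qed
    fix a b assume "a \<in> {..<p}" "b \<in> {..<p}" "(nxt ^^ a) d = (nxt ^^ b) d" "a \<noteq> b"
    then show False using aux[of a b] aux[of b a] by (metis lessThan_iff linorder_neqE_nat)
  qed
  have S: "{x\<in>D. vert x = vert d} = (\<lambda>n. (nxt ^^ n) d) ` {..<p}"
  proof (intro equalityI subsetI)
    fix x assume "x \<in> {x\<in>D. vert x = vert d}"
    then obtain j where "(nxt ^^ j) d = x" using conn[of d x] d by auto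
    then show "x \<in> (\<lambda>n. (nxt ^^ n) d) ` {..<p}" using modp[of j] p by auto
  qed (use d nxtn_in nxtn_vert in auto)
  have vp: "val D vert (vert d) = p" unfolding val_def S using inj by (simp add: card_image)
  show "0 < val D vert (vert d)" "(nxt ^^ val D vert (vert d)) d = d"
    "inj_on (\<lambda>n. (nxt ^^ n) d) {..<val D vert (vert d)}"
    "{x\<in>D. vert x = vert d} = (\<lambda>n. (nxt ^^ n) d) ` {..<val D vert (vert d)}"
    using vp p inj S by auto
qed


lemma actE_grp_inj: assumes "e \<in> E" "a \<in> carrier G" "b \<in> carrier G" "actE a e = actE b e"
  shows "a = b"
proof -
  have "actE (inv b \<otimes> a) e = e" using assms
    by (metis actE_mult actE_one inv_closed l_inv)
  then have "inv b \<otimes> a = \<one>" using assms by (meson freeE inv_closed m_closed)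
  then show ?thesis using assms by (metis inv_closed inv_comm inv_inv l_inv_ex local.inv_equality)
qed

abbreviation rep where "rep \<equiv> rep_dart G edge actE erep"
abbreviation Wt where "Wt \<equiv> W G edge nxt act actE erep"

lemma rep_ex: assumes d: "d \<in> D" shows "\<exists>a\<in>carrier G. rep (orb G act d) = act a d"
proof -
  let ?e = "edge d"
  have e: "?e \<in> E" using d edge_in by auto
  then obtain h where h: "h \<in> carrier G" "erep (orb G actE ?e) = actE h ?e"
    using er unfolding orb_def by blast
  let ?P = "\<lambda>x. x \<in> orb G act d \<and> edge x = erep (orb G actE (edge x))"
  have oe: "orb G actE (actE h ?e) = orb G actE ?e" using orbE_act h e by blast
  have P1: "act h d \<in> orb G act d" using h unfolding orb_def by blast
  have P2: "edge (act h d) = actE h ?e" using h d edge_act by blast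
  have P: "?P (act h d)"
    using P1 P2 oe h(2) by simp
  have U: "y = act h d" if "?P y" for y
  proof -
    from conjunct1[OF that] obtain b where b: "b \<in> carrier G" "y = act b d" unfolding orb_def by auto
    have eq0: "edge y = erep (orb G actE (edge y))" using that by (rule conjunct2)
    have "edge (act b d) = erep (orb G actE (edge (act b d)))" using eq0 unfolding b(2) .
    moreover have "edge (act b d) = actE b ?e" using b d edge_act by blast
    moreover have "orb G actE (actE b ?e) = orb G actE ?e" using orbE_act b e by blast
    ultimately have "actE b ?e = actE h ?e" using h(2) by metis
    then have "b = h" using actE_grp_inj e b h by blast
    then show ?thesis using b by simp
  qed
  have "rep (orb G act d) = act h d" unfolding rep_dart_def
    by (rule the_equality) (use P U in blast)+
  then show ?thesis using h by auto
qed

lemma W_eq: assumes d: "d \<in> D" and w: "w \<in> carrier G"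
  and eq: "nxt (rep (orb G act d)) = act w (rep (orb G act (nxt (rep (orb G act d)))))"
  shows "Wt (orb G act d) = w"
proof -
  obtain a where a: "a \<in> carrier G" "rep (orb G act d) = act a d" using rep_ex d by blast
  have x: "nxt (rep (orb G act d)) \<in> D" using a d act_cl nxt_in by auto
  obtain b where b: "b \<in> carrier G" "rep (orb G act (nxt (rep (orb G act d)))) = act b (nxt (rep (orb G act d)))"
    using rep_ex[OF x] by blast
  have yD: "rep (orb G act (nxt (rep (orb G act d)))) \<in> D" using b x act_cl by auto
  show ?thesis unfolding W_def
  proof (rule the_equality)
    show "w \<in> carrier G \<and> nxt (rep (orb G act d)) = act w (rep (orb G act (nxt (rep (orb G act d)))))"
      using w eq by blast
    fix g assume "g \<in> carrier G \<and> nxt (rep (orb G act d)) = act g (rep (orb G act (nxt (rep (orb G act d)))))"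
    then show "g = w" using act_grp_inj[OF yD, of g w] w eq by metis
  qed
qed

lemma W_carrier: assumes d: "d \<in> D" shows "Wt (orb G act d) \<in> carrier G"
proof -
  obtain a where a: "a \<in> carrier G" "rep (orb G act d) = act a d" using rep_ex d by blast
  have x: "nxt (rep (orb G act d)) \<in> D" using a d act_cl nxt_in by auto
  obtain b where b: "b \<in> carrier G" "rep (orb G act (nxt (rep (orb G act d)))) = act b (nxt (rep (orb G act d)))"
    using rep_ex[OF x] by blast
  have "nxt (rep (orb G act d)) = act (inv b) (rep (orb G act (nxt (rep (orb G act d)))))"
    using b x act_inv by simp
  then have "Wt (orb G act d) = inv b" using W_eq[OF d] b by auto
  then show ?thesis using b by simp
qed

lemma val_act: assumes v: "v \<in> V" and h: "h \<in> carrier G"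
  shows "val D vert (actV h v) = val D vert v"
proof -
  have "{x\<in>D. vert x = actV h v} = act h ` {x\<in>D. vert x = v}"
  proof (intro equalityI subsetI)
    fix y assume y: "y \<in> {x\<in>D. vert x = actV h v}"
    then have "act (inv h) y \<in> {x\<in>D. vert x = v}"
      using h v by (auto simp: act_cl vert_act actV_inv)
    moreover have "y = act h (act (inv h) y)" using y h
      by (metis (no_types, lifting) act_inv inv_closed inv_inv mem_Collect_eq)
    ultimately show "y \<in> act h ` {x\<in>D. vert x = v}" by blast
  qed (use h in \<open>auto simp: act_cl vert_act\<close>)
  moreover have "inj_on (act h) {x\<in>D. vert x = v}"
    by (rule inj_onI) (metis (no_types, lifting) act_inv h mem_Collect_eq)
  ultimately show ?thesis unfolding val_def by (simp add: card_image)
qed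

lemma telescope:
  assumes "\<And>r. c r \<in> carrier G" "\<And>r. e r \<in> carrier G"
  shows "finprod G (\<lambda>r. c r \<otimes> e r \<otimes> inv (c (Suc r))) {..<n} = c 0 \<otimes> finprod G e {..<n} \<otimes> inv (c n)"
proof (induction n)
  case 0
  then show ?case using assms by simp
next
  case (Suc n)
  have cl: "(\<lambda>r. c r \<otimes> e r \<otimes> inv (c (Suc r))) \<in> A \<rightarrow> carrier G" for A using assms by auto
  have cl2: "e \<in> A \<rightarrow> carrier G" for A using assms by auto
  have "finprod G (\<lambda>r. c r \<otimes> e r \<otimes> inv (c (Suc r))) {..<Suc n}
      = (c n \<otimes> e n \<otimes> inv (c (Suc n))) \<otimes> finprod G (\<lambda>r. c r \<otimes> e r \<otimes> inv (c (Suc r))) {..<n}"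
    unfolding lessThan_Suc by (rule finprod_insert) (use assms cl in auto)
  also have "\<dots> = (c n \<otimes> e n \<otimes> inv (c (Suc n))) \<otimes> (c 0 \<otimes> finprod G e {..<n} \<otimes> inv (c n))"
    using Suc by simp
  also have "\<dots> = c 0 \<otimes> (e n \<otimes> finprod G e {..<n}) \<otimes> inv (c (Suc n))"
  proof -
    have fe: "finprod G e {..<n} \<in> carrier G" using cl2 by (rule finprod_closed)
    have "c n \<otimes> inv (c n) = \<one>" using assms by simp
    have cancel: "a \<otimes> (b \<otimes> (inv a \<otimes> x)) = b \<otimes> x"
      if "a \<in> carrier G" "b \<in> carrier G" "x \<in> carrier G" for a b x
      using that by (metis inv_closed m_closed m_lcomm m_assoc r_inv l_one)
    show ?thesis using assms fe by (simp add: m_ac cancel)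
  qed
  also have "\<dots> = c 0 \<otimes> finprod G e {..<Suc n} \<otimes> inv (c (Suc n))"
    unfolding lessThan_Suc using finprod_insert[of "{..<n}" n e] cl2 assms by simp
  finally show ?case .
qed


lemma main:
  assumes i: "i \<in> D" and g: "g \<in> carrier G"
    and k: "k = val_bar G D vert act actV (orb G actV (vert i))"
    and vl: "val D vert (vert i) = k * (s + 1)"
    and seq: "\<forall>t\<le>s. \<forall>r<k. (nxt ^^ (t * k + r)) i = act (g [^] t) ((nxt ^^ r) i)"
    and lst: "(nxt ^^ (k * (s + 1))) i = act (g [^] (s + 1)) i"
  shows "g = omega G D edge vert nxt act actV actE erep (orb G actV (vert i))"
    and "omega G D edge vert nxt act actV actE erep (orb G actV (vert i))
         = finprod G (\<lambda>r. W G edge nxt act actE erep (orb G act ((nxt ^^ r) i))) {..<k}"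
    and "ord g = s + 1"
    and "m_bar G D vert m act actV (orb G actV (vert i)) = (s + 1) * m (vert i)"
    and "\<forall>h\<in>carrier G. \<forall>h'\<in>carrier G.
          actV h (vert i) = actV h' (vert i) \<longleftrightarrow> h \<otimes> inv h' \<in> generate G {g}"
    and "card (rcosets (generate G {g})) = card (orb G actV (vert i))"
proof -
  let ?mu = "vert i"
  let ?vb = "orb G actV ?mu"
  have muV: "?mu \<in> V" using vert_in i .
  note cy = cyc[OF i]
  have kpos: "0 < k" using cy(1) vl by (cases k) auto
  define ir where "ir r = (nxt ^^ r) i" for r
  have ir_in: "ir r \<in> D" for r unfolding ir_def using nxtn_in i .
  have ir_vert: "vert (ir r) = ?mu" for r unfolding ir_def using nxtn_vert i .
  have ir0: "ir 0 = i" unfolding ir_def by simp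
  have irS: "nxt (ir r) = ir (Suc r)" for r unfolding ir_def by simp
  have decomp: "\<exists>t r. t \<le> s \<and> r < k \<and> (nxt ^^ n) i = act (g [^] t) (ir r)" if "n < k * (s + 1)" for n
  proof -
    have "n div k < s + 1" using that by (simp add: less_mult_imp_div_less mult.commute)
    moreover have "n = n div k * k + n mod k" by simp
    moreover have "n mod k < k" using kpos by simp
    ultimately show ?thesis using seq unfolding ir_def by (metis less_Suc_eq_le Suc_eq_plus1)
  qed
  have muvb: "?mu \<in> ?vb" unfolding orb_def using actV_one[OF muV] by (metis image_eqI one_closed)
  have orbs: "orb_darts_at G D vert act actV ?vb = (\<lambda>r. orb G act (ir r)) ` {..<k}"
  proof (intro equalityI subsetI)
    fix \<delta> assume "\<delta> \<in> orb_darts_at G D vert act actV ?vb"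
    then obtain d where d: "d \<in> D" "orb G actV (vert d) = ?vb" "\<delta> = orb G act d"
      unfolding orb_darts_at_def by auto
    have "vert d \<in> orb G actV (vert d)" unfolding orb_def using actV_one vert_in d(1)
      by (metis image_eqI one_closed)
    then have "vert d \<in> ?vb" using d(2) by simp
    then obtain h where h: "h \<in> carrier G" "vert d = actV h ?mu" unfolding orb_def by auto
    let ?d' = "act (inv h) d"
    have d'D: "?d' \<in> D" using act_cl h d by simp
    have "vert ?d' = ?mu" using vert_act[of "inv h" d] h d actV_inv muV by simp
    then have "?d' \<in> (\<lambda>n. (nxt ^^ n) i) ` {..<val D vert ?mu}" using cy(4) d'D by blast
    then obtain n where n: "n < k * (s + 1)" "(nxt ^^ n) i = ?d'" using vl by auto
    obtain t r where tr: "t \<le> s" "r < k" "(nxt ^^ n) i = act (g [^] t) (ir r)" using decomp[OF n(1)] by blast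
    have "orb G act d = orb G act ?d'" using orb_act[of "inv h" d] h d by simp
    also have "\<dots> = orb G act (act (g [^] t) (ir r))" using n tr by simp
    also have "\<dots> = orb G act (ir r)" using orb_act g ir_in by simp
    finally show "\<delta> \<in> (\<lambda>r. orb G act (ir r)) ` {..<k}" using d(3) tr(2) by blast
  next
    fix \<delta> assume "\<delta> \<in> (\<lambda>r. orb G act (ir r)) ` {..<k}"
    then obtain r where r: "\<delta> = orb G act (ir r)" by auto
    have "\<exists>d. \<delta> = orb G act d \<and> d \<in> D \<and> orb G actV (vert d) = ?vb"
      by (rule exI[of _ "ir r"]) (simp add: r ir_in ir_vert)
    then show "\<delta> \<in> orb_darts_at G D vert act actV ?vb"
      unfolding orb_darts_at_def mem_Collect_eq .
  qed
  have cardk: "card ((\<lambda>r. orb G act (ir r)) ` {..<k}) = k"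
    using k orbs unfolding val_bar_def by simp
  have inj: "inj_on (\<lambda>r. orb G act (ir r)) {..<k}"
    by (rule eq_card_imp_inj_on) (use cardk in auto)
  have ik: "ir k = act g i"
  proof (cases "s = 0")
    case True
    then show ?thesis using lst g unfolding ir_def by simp
  next
    case False
    then have "(nxt ^^ (1 * k + 0)) i = act (g [^] (1::nat)) ((nxt ^^ 0) i)" using seq[rule_format, of 1 0] kpos by simp
    then show ?thesis using g unfolding ir_def by simp
  qed
  have gfix: "actV g ?mu = ?mu" using vert_act[OF g i] ik ir_vert[of k] by simp
  have "(nxt ^^ (k * (s + 1))) i = i" using cy(2) vl by simp
  then have gpow1: "g [^] (s + 1) = \<one>" using lst act_fix[OF i] g by simp
  have gnot: "g [^] t \<noteq> \<one>" if t: "0 < t" "t \<le> s" for t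
  proof
    assume gt: "g [^] t = \<one>"
    have "(nxt ^^ (t * k + 0)) i = act (g [^] t) ((nxt ^^ 0) i)" using seq[rule_format, of t 0] t kpos by simp
    then have "(nxt ^^ (t * k)) i = (nxt ^^ 0) i" using gt act_one i by simp
    moreover have "t * k < val D vert ?mu"
    proof -
      have a1: "t * k \<le> s * k" using t by simp
      have a2: "k * (s + 1) = s * k + k" by (simp add: algebra_simps)
      show ?thesis unfolding vl a2 using a1 kpos by linarith
    qed
    moreover have "0 < val D vert ?mu" using cy(1) .
    ultimately have "t * k = 0" using inj_onD[OF cy(3), of "t * k" 0] by simp
    then show False using t kpos by simp
  qed
  show ordg: "ord g = s + 1"
  proof -
    have dv: "ord g dvd s + 1" using pow_eq_id g gpow1 by blast
    have ge: "ord g \<ge> 1" using ord_ge_1 finG g by blast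
    have le: "ord g \<le> s + 1" using dv by (simp add: dvd_imp_le)
    have "\<not> ord g < s + 1" using gnot[of "ord g"] ge pow_ord_eq_1[OF g] by auto
    then show ?thesis using le by simp
  qed
  define a where "a r = (SOME a. a \<in> carrier G \<and> rep (orb G act (ir r)) = act a (ir r))" for r
  have a: "a r \<in> carrier G \<and> rep (orb G act (ir r)) = act (a r) (ir r)" for r
    unfolding a_def by (rule someI_ex) (use rep_ex[OF ir_in[of r]] in blast)
  define c where "c r = (if r < k then a r else a 0)" for r
  define ex where "ex r = (if Suc r = k then g else \<one>)" for r
  have ccar: "c r \<in> carrier G" for r unfolding c_def using a by auto
  have excar: "ex r \<in> carrier G" for r unfolding ex_def using g by auto
  have Wr: "Wt (orb G act (ir r)) = c r \<otimes> ex r \<otimes> inv (c (Suc r))" if r: "r < k" for r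
  proof -
    have ar: "a r \<in> carrier G" "rep (orb G act (ir r)) = act (a r) (ir r)" using a by auto
    show ?thesis
    proof (cases "Suc r < k")
      case True
      have as: "a (Suc r) \<in> carrier G" "rep (orb G act (ir (Suc r))) = act (a (Suc r)) (ir (Suc r))"
        using a by auto
      have n1: "nxt (rep (orb G act (ir r))) = act (a r) (ir (Suc r))"
        using ar nxt_act ir_in irS by simp
      have o1: "orb G act (nxt (rep (orb G act (ir r)))) = orb G act (ir (Suc r))"
        using n1 orb_act ar ir_in by simp
      have "act (a r \<otimes> inv (a (Suc r))) (rep (orb G act (nxt (rep (orb G act (ir r))))))
          = act (a r) (act (inv (a (Suc r))) (act (a (Suc r)) (ir (Suc r))))"
        unfolding o1 as(2) using ar as act_mult act_cl ir_in by simp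
      also have "\<dots> = nxt (rep (orb G act (ir r)))" using n1 act_inv as ir_in by simp
      finally have "Wt (orb G act (ir r)) = a r \<otimes> inv (a (Suc r))"
        using W_eq[OF ir_in, of "a r \<otimes> inv (a (Suc r))" r] ar as by simp
      then show ?thesis unfolding c_def ex_def using True r ar as by simp
    next
      case False
      then have rk: "Suc r = k" using r by simp
      have a0: "a 0 \<in> carrier G" "rep (orb G act i) = act (a 0) i" using a[of 0] unfolding ir0 by auto
      have n1: "nxt (rep (orb G act (ir r))) = act (a r \<otimes> g) i"
        using ar nxt_act ir_in irS rk ik act_mult g i by simp
      have o1: "orb G act (nxt (rep (orb G act (ir r)))) = orb G act (ir 0)"
        using n1 orb_act ar g i ir0 by simp
      have "act (a r \<otimes> g \<otimes> inv (a 0)) (rep (orb G act (nxt (rep (orb G act (ir r))))))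
          = act (a r \<otimes> g) (act (inv (a 0)) (act (a 0) i))"
        unfolding o1 ir0 a0(2) using ar a0 act_mult act_cl i g by simp
      also have "\<dots> = nxt (rep (orb G act (ir r)))" using n1 act_inv a0 i by simp
      finally have "Wt (orb G act (ir r)) = a r \<otimes> g \<otimes> inv (a 0)"
        using W_eq[OF ir_in, of "a r \<otimes> g \<otimes> inv (a 0)" r] ar a0 g by simp
      then show ?thesis unfolding c_def ex_def using rk r kpos by simp
    qed
  qed
  have om1: "omega G D edge vert nxt act actV actE erep ?vb = finprod G (\<lambda>r. Wt (orb G act (ir r))) {..<k}"
    unfolding omega_def orbs by (rule finprod_reindex) (use W_carrier ir_in inj in auto)
  then show "omega G D edge vert nxt act actV actE erep ?vb
         = finprod G (\<lambda>r. W G edge nxt act actE erep (orb G act ((nxt ^^ r) i))) {..<k}"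
    unfolding ir_def .
  have om2: "finprod G (\<lambda>r. Wt (orb G act (ir r))) {..<k} = finprod G (\<lambda>r. c r \<otimes> ex r \<otimes> inv (c (Suc r))) {..<k}"
    by (rule finprod_cong') (use Wr ccar excar in auto)
  have om3: "finprod G (\<lambda>r. c r \<otimes> ex r \<otimes> inv (c (Suc r))) {..<k} = c 0 \<otimes> finprod G ex {..<k} \<otimes> inv (c k)"
    by (rule telescope) (use ccar excar in auto)
  obtain k' where k': "k = Suc k'" using kpos by (cases k) auto
  have exprod: "finprod G ex {..<k} = g"
  proof -
    have "finprod G ex {..<k} = ex k' \<otimes> finprod G ex {..<k'}"
      unfolding k' lessThan_Suc by (rule finprod_insert) (use excar in auto)
    moreover have "finprod G ex {..<k'} = finprod G (\<lambda>_. \<one>) {..<k'}"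
      by (rule finprod_cong') (auto simp: ex_def k')
    ultimately show ?thesis using g by (simp add: ex_def k')
  qed
  have ck: "c k = c 0" unfolding c_def using kpos by simp
  have "c 0 \<otimes> g \<otimes> inv (c 0) = g"
  proof -
    have "c 0 \<otimes> g = g \<otimes> c 0" using m_comm ccar g by blast
    then have "c 0 \<otimes> g \<otimes> inv (c 0) = g \<otimes> c 0 \<otimes> inv (c 0)" by simp
    also have "\<dots> = g \<otimes> (c 0 \<otimes> inv (c 0))" using ccar g by (simp add: m_assoc)
    finally show ?thesis using ccar g by simp
  qed
  then show omg: "g = omega G D edge vert nxt act actV actE erep ?vb"
    using om1 om2 om3 exprod ck by simp
  show "m_bar G D vert m act actV ?vb = (s + 1) * m ?mu"
  proof -
    define mu0 where "mu0 = (SOME mu. mu \<in> ?vb)"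
    have "mu0 \<in> ?vb" unfolding mu0_def using muvb by (rule someI)
    then obtain h where h: "h \<in> carrier G" "mu0 = actV h ?mu" unfolding orb_def by auto
    have "val D vert mu0 = val D vert ?mu" using val_act muV h by simp
    moreover have "m mu0 = m ?mu" using m_act muV h by simp
    moreover have "val_bar G D vert act actV ?vb = k" using k by simp
    ultimately have "m_bar G D vert m act actV ?vb = k * (s + 1) * m ?mu div k"
      unfolding m_bar_def Let_def mu0_def[symmetric] using vl by simp
    moreover have "k * (s + 1) * m ?mu = k * ((s + 1) * m ?mu)" by (rule mult.assoc)
    ultimately show ?thesis using kpos by (metis nonzero_mult_div_cancel_left neq0_conv)
  qed
  have gen: "generate G {g} = {g [^] n | n. n \<in> (UNIV::nat set)}"
    using generate_pow_on_finite_carrier[OF finG g] .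
  have powfix: "actV (g [^] n) ?mu = ?mu" for n :: nat
  proof (induction n)
    case 0 then show ?case using actV_one muV by simp
  next
    case (Suc n) then show ?case using actV_mult[of "g [^] n" g ?mu] g gfix muV by simp
  qed
  have stab: "actV h ?mu = actV h' ?mu \<longleftrightarrow> h \<otimes> inv h' \<in> generate G {g}"
    if hh: "h \<in> carrier G" "h' \<in> carrier G" for h h'
  proof
    assume eq: "actV h ?mu = actV h' ?mu"
    let ?a = "h \<otimes> inv h'"
    have acar: "?a \<in> carrier G" using hh by simp
    have "?a = inv h' \<otimes> h" using hh by (simp add: m_comm)
    then have "actV ?a ?mu = actV (inv h') (actV h ?mu)" using actV_mult hh muV by simp
    also have "\<dots> = ?mu" using eq actV_inv hh muV by simp
    finally have afix: "actV ?a ?mu = ?mu" .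
    have "act ?a i \<in> D" "vert (act ?a i) = ?mu" using act_cl acar i vert_act afix by auto
    then have "act ?a i \<in> (\<lambda>n. (nxt ^^ n) i) ` {..<val D vert ?mu}" using cy(4) by blast
    then obtain n where n: "n < k * (s + 1)" "(nxt ^^ n) i = act ?a i" using vl by auto
    obtain t r where tr: "t \<le> s" "r < k" "(nxt ^^ n) i = act (g [^] t) (ir r)" using decomp[OF n(1)] by blast
    have "orb G act (ir r) = orb G act (act (g [^] t) (ir r))" using orb_act g ir_in by simp
    also have "\<dots> = orb G act (act ?a i)" using n tr by simp
    also have "\<dots> = orb G act (ir 0)" using orb_act acar i ir0 by simp
    finally have "r = 0" using inj tr(2) kpos by (auto dest: inj_onD)
    then have "act ?a i = act (g [^] t) i" using n tr ir0 by simp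
    then have "?a = g [^] t" using act_grp_inj[OF i] acar g by simp
    then show "?a \<in> generate G {g}" unfolding gen by blast
  next
    assume "h \<otimes> inv h' \<in> generate G {g}"
    then obtain n :: nat where n: "h \<otimes> inv h' = g [^] n" unfolding gen by blast
    have "h' \<otimes> (h \<otimes> inv h') = h \<otimes> (h' \<otimes> inv h')" using hh by (intro m_lcomm) auto
    then have "h = h' \<otimes> (h \<otimes> inv h')" using hh by simp
    then have "actV h ?mu = actV h' (actV (h \<otimes> inv h') ?mu)" using actV_mult hh muV by (metis inv_closed m_closed)
    then show "actV h ?mu = actV h' ?mu" using n powfix by simp
  qed
  then show "\<forall>h\<in>carrier G. \<forall>h'\<in>carrier G.
          actV h ?mu = actV h' ?mu \<longleftrightarrow> h \<otimes> inv h' \<in> generate G {g}" by blast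
  let ?H = "generate G {g}"
  have sg: "subgroup ?H G" using generate_is_subgroup g by simp
  have coseq: "?H #> x = ?H #> y \<longleftrightarrow> x \<otimes> inv y \<in> ?H" if xy: "x \<in> carrier G" "y \<in> carrier G" for x y
  proof
    assume "?H #> x = ?H #> y"
    then have "x \<in> ?H #> y" using rcos_self[OF xy(1) sg] by simp
    then obtain h where h: "h \<in> ?H" "x = h \<otimes> y" unfolding r_coset_def by auto
    have "h \<in> carrier G" using subgroup.mem_carrier[OF sg h(1)] .
    then have "x \<otimes> inv y = h" using h xy by (simp add: m_assoc)
    then show "x \<otimes> inv y \<in> ?H" using h by simp
  next
    assume "x \<otimes> inv y \<in> ?H"
    moreover have "?H \<subseteq> carrier G" using sg by (rule subgroup.subset)
    ultimately have "(x \<otimes> inv y) \<otimes> y \<in> ?H #> y" using rcosI xy(2) by blast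
    then have "x \<in> ?H #> y" using xy by (simp add: m_assoc)
    then show "?H #> x = ?H #> y" using repr_independence[OF _ xy(2) sg] by simp
  qed
  have rc: "rcosets ?H = (\<lambda>x. ?H #> x) ` carrier G" unfolding RCOSETS_def by auto
  have ob: "orb G actV ?mu = (\<lambda>x. actV x ?mu) ` carrier G" unfolding orb_def by simp
  show "card (rcosets ?H) = card (orb G actV ?mu)"
    unfolding rc ob
  proof (rule card_image_same_kernel)
    fix x y assume "x \<in> carrier G" "y \<in> carrier G"
    then show "(?H #> x = ?H #> y) = (actV x ?mu = actV y ?mu)"
      using coseq[of x y] stab[of x y] by simp
  qed
qed


lemma struct_lem:
  assumes d: "d \<in> D"
  shows "\<exists>g s. g \<in> carrier G
    \<and> val D vert (vert d) = val_bar G D vert act actV (orb G actV (vert d)) * (s + 1)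
    \<and> (\<forall>t\<le>s. \<forall>r<val_bar G D vert act actV (orb G actV (vert d)).
         (nxt ^^ (t * val_bar G D vert act actV (orb G actV (vert d)) + r)) d
           = act (g [^] t) ((nxt ^^ r) d))
    \<and> (nxt ^^ (val_bar G D vert act actV (orb G actV (vert d)) * (s + 1))) d = act (g [^] (s + 1)) d"
proof -
  let ?mu = "vert d"
  let ?vb = "orb G actV ?mu"
  let ?p = "val D vert ?mu"
  have muV: "?mu \<in> V" using vert_in d .
  note cy = cyc[OF d]
  define dr where "dr r = (nxt ^^ r) d" for r
  have dr_in: "dr r \<in> D" for r unfolding dr_def using nxtn_in d .
  have dr_vert: "vert (dr r) = ?mu" for r unfolding dr_def using nxtn_vert d .
  have dr0: "dr 0 = d" unfolding dr_def by simp
  have d_orb: "d \<in> orb G act d" unfolding orb_def using act_one[OF d] by (metis image_eqI one_closed)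
  define n0 where "n0 = (LEAST n. 0 < n \<and> (nxt ^^ n) d \<in> orb G act d)"
  have Pp: "0 < ?p \<and> (nxt ^^ ?p) d \<in> orb G act d" using cy(1,2) d_orb by simp
  have n0: "0 < n0 \<and> (nxt ^^ n0) d \<in> orb G act d" unfolding n0_def by (rule LeastI[of _ ?p]) (rule Pp)
  have n0min: "\<not> (0 < n \<and> (nxt ^^ n) d \<in> orb G act d)" if "n < n0" for n
    using not_less_Least[of n "\<lambda>n. 0 < n \<and> (nxt ^^ n) d \<in> orb G act d"] that unfolding n0_def by blast
  obtain g where g: "g \<in> carrier G" "(nxt ^^ n0) d = act g d" using n0 unfolding orb_def by auto
  have gen: "(nxt ^^ (q * n0 + r)) d = act (g [^] q) (dr r)" for q r
  proof (induction q)
    case 0 then show ?case unfolding dr_def using act_one nxtn_in d by simp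
  next
    case (Suc q)
    have ee: "Suc q * n0 + r = (q * n0 + r) + n0" by simp
    have "(nxt ^^ (Suc q * n0 + r)) d = (nxt ^^ (q * n0 + r)) ((nxt ^^ n0) d)"
      unfolding ee funpow_add comp_apply ..
    also have "\<dots> = act g ((nxt ^^ (q * n0 + r)) d)" using g nxtn_act d by simp
    also have "\<dots> = act g (act (g [^] q) (dr r))" using Suc by simp
    also have "\<dots> = act (g [^] Suc q) (dr r)"
    proof -
      have "g [^] Suc q = g \<otimes> g [^] q" using g by (simp add: m_comm)
      then show ?thesis using act_mult g dr_in by simp
    qed
    finally show ?case .
  qed
  have orbs: "orb_darts_at G D vert act actV ?vb = (\<lambda>r. orb G act (dr r)) ` {..<n0}"
  proof (intro equalityI subsetI)
    fix \<delta> assume "\<delta> \<in> orb_darts_at G D vert act actV ?vb"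
    then obtain e where e: "e \<in> D" "orb G actV (vert e) = ?vb" "\<delta> = orb G act e"
      unfolding orb_darts_at_def by auto
    have "vert e \<in> orb G actV (vert e)" unfolding orb_def using actV_one vert_in e(1)
      by (metis image_eqI one_closed)
    then have "vert e \<in> ?vb" using e(2) by simp
    then obtain h where h: "h \<in> carrier G" "vert e = actV h ?mu" unfolding orb_def by auto
    let ?e' = "act (inv h) e"
    have e'D: "?e' \<in> D" using act_cl h e by simp
    have "vert ?e' = ?mu" using vert_act[of "inv h" e] h e actV_inv muV by simp
    then have "?e' \<in> (\<lambda>n. (nxt ^^ n) d) ` {..<?p}" using cy(4) e'D by blast
    then obtain n where n: "(nxt ^^ n) d = ?e'" by auto
    have "n = n div n0 * n0 + n mod n0" by simp
    then have "(nxt ^^ n) d = act (g [^] (n div n0)) (dr (n mod n0))" using gen by metis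
    then have eq: "?e' = act (g [^] (n div n0)) (dr (n mod n0))" using n by simp
    have "orb G act e = orb G act ?e'" using orb_act[of "inv h" e] h e by simp
    also have "\<dots> = orb G act (dr (n mod n0))" unfolding eq using orb_act g dr_in by simp
    finally show "\<delta> \<in> (\<lambda>r. orb G act (dr r)) ` {..<n0}" using e(3) n0 by simp
  next
    fix \<delta> assume "\<delta> \<in> (\<lambda>r. orb G act (dr r)) ` {..<n0}"
    then obtain r where r: "\<delta> = orb G act (dr r)" by auto
    have "\<exists>e. \<delta> = orb G act e \<and> e \<in> D \<and> orb G actV (vert e) = ?vb"
      by (rule exI[of _ "dr r"]) (simp add: r dr_in dr_vert)
    then show "\<delta> \<in> orb_darts_at G D vert act actV ?vb"
      unfolding orb_darts_at_def mem_Collect_eq .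
  qed
  have inj: "inj_on (\<lambda>r. orb G act (dr r)) {..<n0}"
  proof (rule inj_onI, rule ccontr)
    have aux: False if rr: "r < r'" "r' < n0" "orb G act (dr r) = orb G act (dr r')" for r r'
    proof -
      have "dr r' \<in> orb G act (dr r')" unfolding orb_def using act_one[OF dr_in] by (metis image_eqI one_closed)
      then have "dr r' \<in> orb G act (dr r)" using rr by simp
      then obtain h where h: "h \<in> carrier G" "dr r' = act h (dr r)" unfolding orb_def by auto
      let ?m = "n0 - r' + r"
      have ee: "(n0 - r') + r' = n0" using rr by simp
      have "(nxt ^^ (n0 - r')) (dr r') = (nxt ^^ ((n0 - r') + r')) d"
        unfolding dr_def funpow_add comp_apply ..
      also have "\<dots> = (nxt ^^ n0) d" unfolding ee ..
      also have "\<dots> = act g d" using g by simp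
      finally have e1: "act g d = (nxt ^^ (n0 - r')) (act h (dr r))" using h by simp
      also have "\<dots> = act h ((nxt ^^ (n0 - r')) (dr r))" using nxtn_act h dr_in by simp
      also have "(nxt ^^ (n0 - r')) (dr r) = (nxt ^^ ?m) d"
        unfolding dr_def funpow_add comp_apply ..
      finally have "act g d = act h ((nxt ^^ ?m) d)" .
      then have "(nxt ^^ ?m) d = act (inv h \<otimes> g) d" using act_inv act_mult h g d nxtn_in
        by (metis inv_closed)
      then have "(nxt ^^ ?m) d \<in> orb G act d" unfolding orb_def using h g by auto
      moreover have "0 < ?m" "?m < n0" using rr by auto
      ultimately show False using n0min by blast
    qed
    fix r r' assume "r \<in> {..<n0}" "r' \<in> {..<n0}" "orb G act (dr r) = orb G act (dr r')" "r \<noteq> r'"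
    then show False using aux[of r r'] aux[of r' r] by (metis lessThan_iff linorder_neqE_nat)
  qed
  have kn0: "val_bar G D vert act actV ?vb = n0"
    unfolding val_bar_def orbs using inj by (simp add: card_image)
  define oo where "oo = ord g"
  have o1: "oo \<ge> 1" unfolding oo_def using ord_ge_1 finG g by blast
  have go: "g [^] oo = \<one>" unfolding oo_def using g by simp
  have le1: "?p \<le> oo * n0"
  proof (rule ccontr)
    assume "\<not> ?p \<le> oo * n0"
    then have lt: "oo * n0 < ?p" by simp
    have "(nxt ^^ (oo * n0)) d = d" using gen[of oo 0] go act_one d dr0 by simp
    then have "(nxt ^^ (oo * n0)) d = (nxt ^^ 0) d" by simp
    then have "oo * n0 = 0" using inj_onD[OF cy(3), of "oo * n0" 0] lt cy(1) by simp
    then show False using o1 n0 by simp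
  qed
  have le2: "oo * n0 \<le> ?p"
  proof -
    define q where "q = ?p div n0"
    define r where "r = ?p mod n0"
    have pq: "?p = q * n0 + r" unfolding q_def r_def by simp
    have rl: "r < n0" unfolding r_def using n0 by simp
    have "act (g [^] q) (dr r) = d" using gen[of q r] pq cy(2) by simp
    then have "dr r = act (inv (g [^] q)) d" using act_inv g dr_in by (metis nat_pow_closed)
    then have "orb G act (dr r) = orb G act (dr 0)" using orb_act g d dr0 by simp
    then have r0: "r = 0" using inj_onD[OF inj, of r 0] rl n0 by simp
    then have "act (g [^] q) d = d" using gen[of q 0] pq cy(2) dr0 by simp
    then have "g [^] q = \<one>" using act_fix d g by simp
    then have "oo dvd q" unfolding oo_def using pow_eq_id g by blast
    moreover have "0 < q" using pq r0 cy(1) by (cases q) auto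
    ultimately have "oo \<le> q" by (simp add: dvd_imp_le)
    then show ?thesis using pq r0 by simp
  qed
  have pv: "?p = n0 * ((oo - 1) + 1)" using le1 le2 o1 by (simp add: mult.commute)
  show ?thesis
  proof (intro exI conjI)
    show "g \<in> carrier G" by (rule g)
    show "?p = val_bar G D vert act actV ?vb * ((oo - 1) + 1)" unfolding kn0 by (rule pv)
    show "\<forall>t \<le> oo - 1. \<forall>r<val_bar G D vert act actV ?vb.
         (nxt ^^ (t * val_bar G D vert act actV ?vb + r)) d = act (g [^] t) ((nxt ^^ r) d)"
      unfolding kn0 using gen unfolding dr_def by blast
    show "(nxt ^^ (val_bar G D vert act actV ?vb * ((oo - 1) + 1))) d = act (g [^] ((oo - 1) + 1)) d"
      unfolding kn0 using gen[of "(oo - 1) + 1" 0] dr0 by (simp add: mult.commute)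
  qed
qed

lemma bw: "brauer_weighting G V D edge vert nxt m act actV actE erep"
  unfolding brauer_weighting_def
proof
  fix vb assume "vb \<in> orb G actV ` V"
  then obtain d where d: "d \<in> D" "vb = orb G actV (vert d)" using V_eq by auto
  obtain g s where gs: "g \<in> carrier G"
    "val D vert (vert d) = val_bar G D vert act actV (orb G actV (vert d)) * (s + 1)"
    "\<forall>t\<le>s. \<forall>r<val_bar G D vert act actV (orb G actV (vert d)).
         (nxt ^^ (t * val_bar G D vert act actV (orb G actV (vert d)) + r)) d
           = act (g [^] t) ((nxt ^^ r) d)"
    "(nxt ^^ (val_bar G D vert act actV (orb G actV (vert d)) * (s + 1))) d = act (g [^] (s + 1)) d"
    using struct_lem[OF d(1)] by blast
  note M = main[OF d(1) gs(1) refl gs(2) gs(3) gs(4)]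
  have "ord_bar G D edge vert nxt act actV actE erep vb = s + 1"
    unfolding ord_bar_def d(2) using M(1)[symmetric] M(3) by simp
  then show "ord_bar G D edge vert nxt act actV actE erep vb dvd m_bar G D vert m act actV vb"
    unfolding d(2) using M(4) by (metis dvd_triv_left)
qed

end

theorem lemma5p1:
  fixes G :: "('g, 'b) monoid_scheme"
    and V :: "'v set" and E :: "'e set" and D :: "'d set"
    and edge :: "'d \<Rightarrow> 'e" and vert :: "'d \<Rightarrow> 'v" and nxt :: "'d \<Rightarrow> 'd"
    and m :: "'v \<Rightarrow> nat"
    and act :: "'g \<Rightarrow> 'd \<Rightarrow> 'd" and actV :: "'g \<Rightarrow> 'v \<Rightarrow> 'v" and actE :: "'g \<Rightarrow> 'e \<Rightarrow> 'e"
    and erep :: "'e set \<Rightarrow> 'e"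
    and i :: 'd and g :: 'g and k s :: nat
  assumes "comm_group G" and "finite (carrier G)"
    and "brauer_graph V E D edge vert nxt m"
    and "free_brauer_action G V E D edge vert nxt m act actV actE"
    and "\<forall>e\<in>E. erep (orb G actE e) \<in> orb G actE e"
    and "i \<in> D" and "g \<in> carrier G"
    and "k = val_bar G D vert act actV (orb G actV (vert i))"
    and "val D vert (vert i) = k * (s + 1)"
    and "\<forall>t\<le>s. \<forall>r<k. (nxt ^^ (t * k + r)) i = act (g [^]\<^bsub>G\<^esub> t) ((nxt ^^ r) i)"
    and "(nxt ^^ (k * (s + 1))) i = act (g [^]\<^bsub>G\<^esub> (s + 1)) i"
  shows
    "g = omega G D edge vert nxt act actV actE erep (orb G actV (vert i))
     \<and> omega G D edge vert nxt act actV actE erep (orb G actV (vert i))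
         = finprod G (\<lambda>r. W G edge nxt act actE erep (orb G act ((nxt ^^ r) i))) {..<k}
     \<and> ord_bar G D edge vert nxt act actV actE erep (orb G actV (vert i)) = s + 1
     \<and> ord_bar G D edge vert nxt act actV actE erep (orb G actV (vert i))
         dvd m_bar G D vert m act actV (orb G actV (vert i))
     \<and> brauer_weighting G V D edge vert nxt m act actV actE erep
     \<and> (\<forall>h\<in>carrier G. \<forall>h'\<in>carrier G.
          actV h (vert i) = actV h' (vert i) \<longleftrightarrow>
          h \<otimes>\<^bsub>G\<^esub> inv\<^bsub>G\<^esub> h'
            \<in> generate G {omega G D edge vert nxt act actV actE erep (orb G actV (vert i))})
     \<and> card (rcosets\<^bsub>G\<^esub> (generate G {omega G D edge vert nxt act actV actE erep (orb G actV (vert i))}))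
         = card (orb G actV (vert i))"
proof -
  interpret fba G V E D edge vert nxt m act actV actE erep
    unfolding fba_def using assms(1-5) by blast
  note M = main[OF assms(6) assms(7) assms(8) assms(9) assms(10) assms(11)]
  have om: "omega G D edge vert nxt act actV actE erep (orb G actV (vert i)) = g" using M(1) by simp
  show ?thesis
    unfolding ord_bar_def om using M(1-6) bw dvd_triv_left[of "s + 1" "m (vert i)"]
    by (simp add: dvd_triv_left)
qed

end
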